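(* Let $G$ be the alternating group $A_4$ on $4$ elements (a group of order $12$). Then there do not exist subsets $A_1, A_2, A_3 \subseteq G$ with $\mathrm{card}(A_1)=2$, $\mathrm{card}(A_2)=3$, $\mathrm{card}(A_3)=2$ such that the multiplication map $A_1\times A_2\times A_3\to G$, $(a_1,a_2,a_3)\mapsto a_1a_2a_3$, is a bijection. *)

theory Defs
  imports "HOL-Algebra.Sym_Groups"
begin

end

theory Submission
  imports Defs
begin

datatype a4 = E0 | E1 | E2 | E3 | E4 | E5 | E6 | E7 | E8 | E9 | E10 | E11

fun phi :: "a4 \<Rightarrow> nat \<Rightarrow> nat" where
  "phi E0 = (id)" |
  "phi E1 = (transpose 1 2 \<circ> transpose 3 4)" |
  "phi E2 = (transpose 1 3 \<circ> transpose 2 4)" |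
  "phi E3 = (transpose 1 4 \<circ> transpose 2 3)" |
  "phi E4 = (transpose 1 2 \<circ> transpose 2 3)" |
  "phi E5 = (transpose 1 3 \<circ> transpose 3 2)" |
  "phi E6 = (transpose 1 2 \<circ> transpose 2 4)" |
  "phi E7 = (transpose 1 4 \<circ> transpose 4 2)" |
  "phi E8 = (transpose 1 3 \<circ> transpose 3 4)" |
  "phi E9 = (transpose 1 4 \<circ> transpose 4 3)" |
  "phi E10 = (transpose 2 3 \<circ> transpose 3 4)" |
  "phi E11 = (transpose 2 4 \<circ> transpose 4 3)"

primrec mt :: "a4 \<Rightarrow> a4 \<Rightarrow> a4" where
  "mt E0 = (\<lambda>y. case y of E0 \<Rightarrow> E0 | E1 \<Rightarrow> E1 | E2 \<Rightarrow> E2 | E3 \<Rightarrow> E3 | E4 \<Rightarrow> E4 | E5 \<Rightarrow> E5 | E6 \<Rightarrow> E6 | E7 \<Rightarrow> E7 | E8 \<Rightarrow> E8 | E9 \<Rightarrow> E9 | E10 \<Rightarrow> E10 | E11 \<Rightarrow> E11)" |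
  "mt E1 = (\<lambda>y. case y of E0 \<Rightarrow> E1 | E1 \<Rightarrow> E0 | E2 \<Rightarrow> E3 | E3 \<Rightarrow> E2 | E4 \<Rightarrow> E11 | E5 \<Rightarrow> E9 | E6 \<Rightarrow> E10 | E7 \<Rightarrow> E8 | E8 \<Rightarrow> E7 | E9 \<Rightarrow> E5 | E10 \<Rightarrow> E6 | E11 \<Rightarrow> E4)" |
  "mt E2 = (\<lambda>y. case y of E0 \<Rightarrow> E2 | E1 \<Rightarrow> E3 | E2 \<Rightarrow> E0 | E3 \<Rightarrow> E1 | E4 \<Rightarrow> E7 | E5 \<Rightarrow> E10 | E6 \<Rightarrow> E9 | E7 \<Rightarrow> E4 | E8 \<Rightarrow> E11 | E9 \<Rightarrow> E6 | E10 \<Rightarrow> E5 | E11 \<Rightarrow> E8)" |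
  "mt E3 = (\<lambda>y. case y of E0 \<Rightarrow> E3 | E1 \<Rightarrow> E2 | E2 \<Rightarrow> E1 | E3 \<Rightarrow> E0 | E4 \<Rightarrow> E8 | E5 \<Rightarrow> E6 | E6 \<Rightarrow> E5 | E7 \<Rightarrow> E11 | E8 \<Rightarrow> E4 | E9 \<Rightarrow> E10 | E10 \<Rightarrow> E9 | E11 \<Rightarrow> E7)" |
  "mt E4 = (\<lambda>y. case y of E0 \<Rightarrow> E4 | E1 \<Rightarrow> E8 | E2 \<Rightarrow> E11 | E3 \<Rightarrow> E7 | E4 \<Rightarrow> E5 | E5 \<Rightarrow> E0 | E6 \<Rightarrow> E2 | E7 \<Rightarrow> E9 | E8 \<Rightarrow> E10 | E9 \<Rightarrow> E3 | E10 \<Rightarrow> E1 | E11 \<Rightarrow> E6)" |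
  "mt E5 = (\<lambda>y. case y of E0 \<Rightarrow> E5 | E1 \<Rightarrow> E10 | E2 \<Rightarrow> E6 | E3 \<Rightarrow> E9 | E4 \<Rightarrow> E0 | E5 \<Rightarrow> E4 | E6 \<Rightarrow> E11 | E7 \<Rightarrow> E3 | E8 \<Rightarrow> E1 | E9 \<Rightarrow> E7 | E10 \<Rightarrow> E8 | E11 \<Rightarrow> E2)" |
  "mt E6 = (\<lambda>y. case y of E0 \<Rightarrow> E6 | E1 \<Rightarrow> E9 | E2 \<Rightarrow> E5 | E3 \<Rightarrow> E10 | E4 \<Rightarrow> E3 | E5 \<Rightarrow> E8 | E6 \<Rightarrow> E7 | E7 \<Rightarrow> E0 | E8 \<Rightarrow> E2 | E9 \<Rightarrow> E11 | E10 \<Rightarrow> E4 | E11 \<Rightarrow> E1)" |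
  "mt E7 = (\<lambda>y. case y of E0 \<Rightarrow> E7 | E1 \<Rightarrow> E11 | E2 \<Rightarrow> E8 | E3 \<Rightarrow> E4 | E4 \<Rightarrow> E10 | E5 \<Rightarrow> E2 | E6 \<Rightarrow> E0 | E7 \<Rightarrow> E6 | E8 \<Rightarrow> E5 | E9 \<Rightarrow> E1 | E10 \<Rightarrow> E3 | E11 \<Rightarrow> E9)" |
  "mt E8 = (\<lambda>y. case y of E0 \<Rightarrow> E8 | E1 \<Rightarrow> E4 | E2 \<Rightarrow> E7 | E3 \<Rightarrow> E11 | E4 \<Rightarrow> E6 | E5 \<Rightarrow> E3 | E6 \<Rightarrow> E1 | E7 \<Rightarrow> E10 | E8 \<Rightarrow> E9 | E9 \<Rightarrow> E0 | E10 \<Rightarrow> E2 | E11 \<Rightarrow> E5)" |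
  "mt E9 = (\<lambda>y. case y of E0 \<Rightarrow> E9 | E1 \<Rightarrow> E6 | E2 \<Rightarrow> E10 | E3 \<Rightarrow> E5 | E4 \<Rightarrow> E1 | E5 \<Rightarrow> E11 | E6 \<Rightarrow> E4 | E7 \<Rightarrow> E2 | E8 \<Rightarrow> E0 | E9 \<Rightarrow> E8 | E10 \<Rightarrow> E7 | E11 \<Rightarrow> E3)" |
  "mt E10 = (\<lambda>y. case y of E0 \<Rightarrow> E10 | E1 \<Rightarrow> E5 | E2 \<Rightarrow> E9 | E3 \<Rightarrow> E6 | E4 \<Rightarrow> E2 | E5 \<Rightarrow> E7 | E6 \<Rightarrow> E8 | E7 \<Rightarrow> E1 | E8 \<Rightarrow> E3 | E9 \<Rightarrow> E4 | E10 \<Rightarrow> E11 | E11 \<Rightarrow> E0)" |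
  "mt E11 = (\<lambda>y. case y of E0 \<Rightarrow> E11 | E1 \<Rightarrow> E7 | E2 \<Rightarrow> E4 | E3 \<Rightarrow> E8 | E4 \<Rightarrow> E9 | E5 \<Rightarrow> E1 | E6 \<Rightarrow> E3 | E7 \<Rightarrow> E5 | E8 \<Rightarrow> E6 | E9 \<Rightarrow> E2 | E10 \<Rightarrow> E0 | E11 \<Rightarrow> E10)"


lemma ex_a4: "(\<exists>e. P e) = (P E0 \<or> P E1 \<or> P E2 \<or> P E3 \<or> P E4 \<or> P E5 \<or> P E6 \<or> P E7 \<or>
   P E8 \<or> P E9 \<or> P E10 \<or> P E11)"
proof
  assume "\<exists>e. P e" then obtain e where "P e" ..
  then show "P E0 \<or> P E1 \<or> P E2 \<or> P E3 \<or> P E4 \<or> P E5 \<or> P E6 \<or> P E7 \<or>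
   P E8 \<or> P E9 \<or> P E10 \<or> P E11" by (cases e) simp_all
qed blast

lemma model_cube: "mt e e = E0 \<or> mt (mt e e) e = E0"
  by (cases e) simp_all

lemma perm_eq4:
  assumes "p permutes {1..4::nat}" "q permutes {1..4}"
    "p 1 = q 1" "p 2 = q 2" "p 3 = q 3" "p 4 = q 4"
  shows "p = q"
proof
  fix n show "p n = q n"
  proof cases
    assume "n \<in> {1..4}" then have "n = 1 \<or> n = 2 \<or> n = 3 \<or> n = 4" by auto
    with assms show ?thesis by auto
  next
    assume "n \<notin> {1..4}" with assms show ?thesis by (simp add: permutes_not_in)
  qed
qed

lemma phi_perm: "phi e permutes {1..4}"
  by (cases e) (auto intro!: permutes_compose permutes_swap_id)

lemma phi_even: "evenperm (phi e)"
  by (cases e) (simp_all add: evenperm_comp permutation_swap_id evenperm_swap)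

lemma phi_carrier: "phi e \<in> carrier (alt_group 4)"
  using phi_perm phi_even by (simp add: alt_group_carrier)

lemma phi_hom: "phi (mt a b) = phi a \<circ> phi b"
  by (cases a; cases b; rule perm_eq4; (rule phi_perm | rule permutes_compose[OF phi_perm phi_perm] | simp add: transpose_def))

lemma phi_inj: assumes "phi a = phi b" shows "a = b"
proof -
  from assms have "phi a 1 = phi b 1 \<and> phi a 2 = phi b 2 \<and> phi a 3 = phi b 3" by simp
  then show ?thesis by (cases a; cases b; simp add: transpose_def)
qed

lemma model_no:
  "mt x x = E0 \<Longrightarrow> mt y y = E0 \<Longrightarrow>
   distinct [E0, x, y, mt x y, u, mt x u, mt u y, mt (mt x u) y,
             v, mt x v, mt v y, mt (mt x v) y] \<Longrightarrow> False"
  by (cases x; simp; cases y; simp; cases u; simp; cases v; simp)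

lemma (in group) inv_cancel_left:
  "a \<in> carrier G \<Longrightarrow> z \<in> carrier G \<Longrightarrow> inv a \<otimes> (a \<otimes> z) = z"
  by (simp add: m_assoc[symmetric])

lemma (in group) cancel_inv_left:
  "a \<in> carrier G \<Longrightarrow> z \<in> carrier G \<Longrightarrow> a \<otimes> (inv a \<otimes> z) = z"
  by (simp add: m_assoc[symmetric])

lemma (in group) sq_aux_x:
  assumes c: "x \<in> carrier G" "y \<in> carrier G" "u \<in> carrier G" "v \<in> carrier G"
    and d: "distinct [\<one>, x, y, x \<otimes> y, u, x \<otimes> u, u \<otimes> y, x \<otimes> u \<otimes> y,
                v, x \<otimes> v, v \<otimes> y, x \<otimes> v \<otimes> y]"
    and m: "x \<otimes> x \<in> set [\<one>, x, y, x \<otimes> y, u, x \<otimes> u, u \<otimes> y, x \<otimes> u \<otimes> y,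
                v, x \<otimes> v, v \<otimes> y, x \<otimes> v \<otimes> y]"
    and cube: "x \<otimes> x \<otimes> x = \<one>"
  shows "x \<otimes> x = \<one>"
proof -
  have A: "x \<otimes> w = \<one>" if "x \<otimes> x = w" "w \<in> carrier G" for w
    using cube that c by (metis m_assoc)
  have B: "x = w" if "x \<otimes> x = x \<otimes> w" "w \<in> carrier G" for w
    using that c by simp
  from m have "x \<otimes> x = \<one> \<or> x \<otimes> x = x \<or> x \<otimes> x = y \<or> x \<otimes> x = x \<otimes> y \<or>
     x \<otimes> x = u \<or> x \<otimes> x = x \<otimes> u \<or> x \<otimes> x = u \<otimes> y \<or> x \<otimes> x = x \<otimes> (u \<otimes> y) \<or>
     x \<otimes> x = v \<or> x \<otimes> x = x \<otimes> v \<or> x \<otimes> x = v \<otimes> y \<or> x \<otimes> x = x \<otimes> (v \<otimes> y)"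
    using c by (simp add: m_assoc)
  then show ?thesis
  proof (elim disjE)
    assume "x \<otimes> x = \<one>" then show ?thesis .
  next
    assume "x \<otimes> x = x" then show ?thesis using A c by blast
  next
    assume "x \<otimes> x = y" then have "x \<otimes> y = \<one>" using A c by blast
    then show ?thesis using d by simp
  next
    assume "x \<otimes> x = x \<otimes> y" then have "x = y" using B c by blast
    then show ?thesis using d by simp
  next
    assume "x \<otimes> x = u" then have "x \<otimes> u = \<one>" using A c by blast
    then show ?thesis using d by simp
  next
    assume "x \<otimes> x = x \<otimes> u" then have "x = u" using B c by blast
    then show ?thesis using d by simp
  next
    assume "x \<otimes> x = u \<otimes> y" then have "x \<otimes> (u \<otimes> y) = \<one>" using A c by blast
    then show ?thesis using d c by (simp add: m_assoc)
  next
    assume "x \<otimes> x = x \<otimes> (u \<otimes> y)" then have "x = u \<otimes> y" using B c by blast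
    then show ?thesis using d by simp
  next
    assume "x \<otimes> x = v" then have "x \<otimes> v = \<one>" using A c by blast
    then show ?thesis using d by simp
  next
    assume "x \<otimes> x = x \<otimes> v" then have "x = v" using B c by blast
    then show ?thesis using d by simp
  next
    assume "x \<otimes> x = v \<otimes> y" then have "x \<otimes> (v \<otimes> y) = \<one>" using A c by blast
    then show ?thesis using d c by (simp add: m_assoc)
  next
    assume "x \<otimes> x = x \<otimes> (v \<otimes> y)" then have "x = v \<otimes> y" using B c by blast
    then show ?thesis using d by simp
  qed
qed

lemma (in group) sq_aux_y:
  assumes c: "x \<in> carrier G" "y \<in> carrier G" "u \<in> carrier G" "v \<in> carrier G"
    and d: "distinct [\<one>, x, y, x \<otimes> y, u, x \<otimes> u, u \<otimes> y, x \<otimes> u \<otimes> y,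
                v, x \<otimes> v, v \<otimes> y, x \<otimes> v \<otimes> y]"
    and m: "y \<otimes> y \<in> set [\<one>, x, y, x \<otimes> y, u, x \<otimes> u, u \<otimes> y, x \<otimes> u \<otimes> y,
                v, x \<otimes> v, v \<otimes> y, x \<otimes> v \<otimes> y]"
    and cube: "y \<otimes> y \<otimes> y = \<one>"
  shows "y \<otimes> y = \<one>"
proof -
  have A: "w \<otimes> y = \<one>" if "y \<otimes> y = w" "w \<in> carrier G" for w
    using cube that c by metis
  have B: "y = w" if "y \<otimes> y = w \<otimes> y" "w \<in> carrier G" for w
    using that c by simp
  from m have "y \<otimes> y = \<one> \<or> y \<otimes> y = x \<or> y \<otimes> y = y \<or> y \<otimes> y = x \<otimes> y \<or>
     y \<otimes> y = u \<or> y \<otimes> y = x \<otimes> u \<or> y \<otimes> y = u \<otimes> y \<or> y \<otimes> y = x \<otimes> u \<otimes> y \<or>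
     y \<otimes> y = v \<or> y \<otimes> y = x \<otimes> v \<or> y \<otimes> y = v \<otimes> y \<or> y \<otimes> y = x \<otimes> v \<otimes> y"
    using c by simp
  then show ?thesis
  proof (elim disjE)
    assume "y \<otimes> y = \<one>" then show ?thesis .
  next
    assume "y \<otimes> y = x" then have "x \<otimes> y = \<one>" using A c by blast
    then show ?thesis using d by simp
  next
    assume "y \<otimes> y = y" then show ?thesis using A c by blast
  next
    assume "y \<otimes> y = x \<otimes> y" then have "y = x" using B c by blast
    then show ?thesis using d by simp
  next
    assume "y \<otimes> y = u" then have "u \<otimes> y = \<one>" using A c by blast
    then show ?thesis using d by simp
  next
    assume "y \<otimes> y = x \<otimes> u" then have "x \<otimes> u \<otimes> y = \<one>" using A c by blast
    then show ?thesis using d by simp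
  next
    assume "y \<otimes> y = u \<otimes> y" then have "y = u" using B c by blast
    then show ?thesis using d by simp
  next
    assume "y \<otimes> y = x \<otimes> u \<otimes> y" then have "y = x \<otimes> u" using B c by blast
    then show ?thesis using d by simp
  next
    assume "y \<otimes> y = v" then have "v \<otimes> y = \<one>" using A c by blast
    then show ?thesis using d by simp
  next
    assume "y \<otimes> y = x \<otimes> v" then have "x \<otimes> v \<otimes> y = \<one>" using A c by blast
    then show ?thesis using d by simp
  next
    assume "y \<otimes> y = v \<otimes> y" then have "y = v" using B c by blast
    then show ?thesis using d by simp
  next
    assume "y \<otimes> y = x \<otimes> v \<otimes> y" then have "y = x \<otimes> v" using B c by blast
    then show ?thesis using d by simp
  qed
qed


lemma phi_surj:
  assumes "p \<in> carrier (alt_group 4)"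
  shows "\<exists>e. p = phi e"
proof -
  have pp: "p permutes {1..4}" and ev: "evenperm p" using assms by (auto simp: alt_group_carrier)
  have r: "p i \<in> {1..4}" if "i \<in> {1..4}" for i using permutes_in_image[OF pp] that by blast
  have r': "p i = 1 \<or> p i = 2 \<or> p i = 3 \<or> p i = 4" if "i \<in> {1..4}" for i
    using r[OF that] by auto
  have ij: "inj p" using pp by (rule permutes_inj)
  have d0: "p i \<noteq> p j" if "i \<noteq> j" for i j using ij that unfolding inj_def by blast
  have d: "p 1 \<noteq> p 2" "p 1 \<noteq> p 3" "p 1 \<noteq> p 4" "p 2 \<noteq> p 3" "p 2 \<noteq> p 4" "p 3 \<noteq> p 4"
    by (simp_all add: d0)
  have "\<exists>e. (p 1 = phi e 1 \<and> p 2 = phi e 2 \<and> p 3 = phi e 3 \<and> p 4 = phi e 4) \<or>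
            (p 1 = (transpose 1 2 \<circ> phi e) 1 \<and> p 2 = (transpose 1 2 \<circ> phi e) 2 \<and>
             p 3 = (transpose 1 2 \<circ> phi e) 3 \<and> p 4 = (transpose 1 2 \<circ> phi e) 4)"
    using r'[of 1, simplified] r'[of 2, simplified] r'[of 3, simplified] r'[of 4, simplified] d
    unfolding ex_a4 by (elim disjE) (simp_all add: transpose_def)
  then obtain e where "(p 1 = phi e 1 \<and> p 2 = phi e 2 \<and> p 3 = phi e 3 \<and> p 4 = phi e 4) \<or>
            (p 1 = (transpose 1 2 \<circ> phi e) 1 \<and> p 2 = (transpose 1 2 \<circ> phi e) 2 \<and>
             p 3 = (transpose 1 2 \<circ> phi e) 3 \<and> p 4 = (transpose 1 2 \<circ> phi e) 4)" by blast
  then show ?thesis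
  proof
    assume "p 1 = phi e 1 \<and> p 2 = phi e 2 \<and> p 3 = phi e 3 \<and> p 4 = phi e 4"
    then have "p = phi e" using pp phi_perm by (intro perm_eq4) auto
    then show ?thesis by blast
  next
    assume h: "p 1 = (transpose 1 2 \<circ> phi e) 1 \<and> p 2 = (transpose 1 2 \<circ> phi e) 2 \<and>
             p 3 = (transpose 1 2 \<circ> phi e) 3 \<and> p 4 = (transpose 1 2 \<circ> phi e) 4"
    have tp: "transpose 1 2 \<circ> phi e permutes {1..4}"
      by (intro permutes_compose phi_perm permutes_swap_id) auto
    from h have "p = transpose 1 2 \<circ> phi e" using pp tp by (intro perm_eq4) auto
    have pe: "permutation (phi e)"
      using phi_perm[of e] finite_atLeastAtMost[of "1::nat" 4] unfolding permutation_permutes by blast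
    have "evenperm (transpose (1::nat) 2 \<circ> phi e) = (evenperm (transpose (1::nat) 2) = evenperm (phi e))"
      by (rule evenperm_comp[OF permutation_swap_id pe])
    then have "evenperm p = (evenperm (transpose (1::nat) 2) = evenperm (phi e))"
      using \<open>p = transpose 1 2 \<circ> phi e\<close> by simp
    then have False using ev phi_even by (simp add: evenperm_swap)
    then show ?thesis ..
  qed
qed

lemma phi_E0: "phi E0 = id" by simp

theorem proposition1p3:
  shows "\<not> (\<exists>A1 A2 A3.
           A1 \<subseteq> carrier (alt_group 4) \<and> A2 \<subseteq> carrier (alt_group 4) \<and>
           A3 \<subseteq> carrier (alt_group 4) \<and>
           card A1 = 2 \<and> card A2 = 3 \<and> card A3 = 2 \<and>
           bij_betw (\<lambda>(a1, a2, a3). a1 \<otimes>\<^bsub>alt_group 4\<^esub> a2 \<otimes>\<^bsub>alt_group 4\<^esub> a3)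
             (A1 \<times> A2 \<times> A3) (carrier (alt_group 4)))"
proof
  assume "\<exists>A1 A2 A3.
           A1 \<subseteq> carrier (alt_group 4) \<and> A2 \<subseteq> carrier (alt_group 4) \<and>
           A3 \<subseteq> carrier (alt_group 4) \<and>
           card A1 = 2 \<and> card A2 = 3 \<and> card A3 = 2 \<and>
           bij_betw (\<lambda>(a1, a2, a3). a1 \<otimes>\<^bsub>alt_group 4\<^esub> a2 \<otimes>\<^bsub>alt_group 4\<^esub> a3)
             (A1 \<times> A2 \<times> A3) (carrier (alt_group 4))"
  then obtain A1 A2 A3 where s1: "A1 \<subseteq> carrier (alt_group 4)" and s2: "A2 \<subseteq> carrier (alt_group 4)"
    and s3: "A3 \<subseteq> carrier (alt_group 4)" and c1: "card A1 = 2" and c2: "card A2 = 3" and c3: "card A3 = 2"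
    and b: "bij_betw (\<lambda>(a1, a2, a3). a1 \<otimes>\<^bsub>alt_group 4\<^esub> a2 \<otimes>\<^bsub>alt_group 4\<^esub> a3)
             (A1 \<times> A2 \<times> A3) (carrier (alt_group 4))" by blast
  interpret G: group "alt_group 4" by (rule alt_group_is_group)
  define f where "f = (\<lambda>(a1, a2, a3). a1 \<otimes>\<^bsub>alt_group 4\<^esub> a2 \<otimes>\<^bsub>alt_group 4\<^esub> a3)"
  have bf: "bij_betw f (A1 \<times> A2 \<times> A3) (carrier (alt_group 4))" using b unfolding f_def .
  from c1 obtain a a' where A1: "A1 = {a, a'}" and aa: "a \<noteq> a'" by (auto simp: card_2_iff)
  from c2 obtain u0 u1 u2 where A2: "A2 = {u0, u1, u2}" and uu: "u0 \<noteq> u1" "u1 \<noteq> u2" "u0 \<noteq> u2"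
    by (auto simp: card_3_iff)
  from c3 obtain c c' where A3: "A3 = {c, c'}" and cc: "c \<noteq> c'" by (auto simp: card_2_iff)
  have car: "a \<in> carrier (alt_group 4)" "a' \<in> carrier (alt_group 4)"
    "u0 \<in> carrier (alt_group 4)" "u1 \<in> carrier (alt_group 4)" "u2 \<in> carrier (alt_group 4)"
    "c \<in> carrier (alt_group 4)" "c' \<in> carrier (alt_group 4)"
    using s1 s2 s3 A1 A2 A3 by auto
  define T where "T = [(a,u0,c),(a',u0,c),(a,u0,c'),(a',u0,c'),
                       (a,u1,c),(a',u1,c),(a,u1,c'),(a',u1,c'),
                       (a,u2,c),(a',u2,c),(a,u2,c'),(a',u2,c')]"
  have dT: "distinct T" unfolding T_def using aa uu cc by auto
  have sT: "set T = A1 \<times> A2 \<times> A3" unfolding T_def A1 A2 A3 by auto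
  have dfT: "distinct (map f T)"
    using dT bij_betw_imp_inj_on[OF bf] unfolding sT[symmetric] by (simp add: distinct_map)
  have surjT: "set (map f T) = carrier (alt_group 4)"
    using bij_betw_imp_surj_on[OF bf] sT by simp
  define h where "h = (\<lambda>g. inv\<^bsub>alt_group 4\<^esub> a \<otimes>\<^bsub>alt_group 4\<^esub> g \<otimes>\<^bsub>alt_group 4\<^esub> inv\<^bsub>alt_group 4\<^esub> c
                          \<otimes>\<^bsub>alt_group 4\<^esub> inv\<^bsub>alt_group 4\<^esub> u0)"
  have hinj: "inj_on h (carrier (alt_group 4))"
    by (rule inj_onI) (simp add: h_def car)
  define x where "x = inv\<^bsub>alt_group 4\<^esub> a \<otimes>\<^bsub>alt_group 4\<^esub> a'"
  define y where "y = u0 \<otimes>\<^bsub>alt_group 4\<^esub> c' \<otimes>\<^bsub>alt_group 4\<^esub> inv\<^bsub>alt_group 4\<^esub> c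
                          \<otimes>\<^bsub>alt_group 4\<^esub> inv\<^bsub>alt_group 4\<^esub> u0"
  define u where "u = u1 \<otimes>\<^bsub>alt_group 4\<^esub> inv\<^bsub>alt_group 4\<^esub> u0"
  define v where "v = u2 \<otimes>\<^bsub>alt_group 4\<^esub> inv\<^bsub>alt_group 4\<^esub> u0"
  have xc: "x \<in> carrier (alt_group 4)" "y \<in> carrier (alt_group 4)"
      "u \<in> carrier (alt_group 4)" "v \<in> carrier (alt_group 4)"
    unfolding x_def y_def u_def v_def using car by auto
  let ?m = "(\<otimes>\<^bsub>alt_group 4\<^esub>)"
  define L where "L = [\<one>\<^bsub>alt_group 4\<^esub>, x, y, ?m x y, u, ?m x u, ?m u y, ?m (?m x u) y,
                       v, ?m x v, ?m v y, ?m (?m x v) y]"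
  have hL: "map h (map f T) = L"
    unfolding L_def T_def h_def f_def x_def y_def u_def v_def
    using car by (simp add: G.m_assoc G.inv_cancel_left G.cancel_inv_left)
  have dL: "distinct L"
  proof -
    have "set (map f T) \<subseteq> carrier (alt_group 4)" using surjT by simp
    then have "inj_on h (set (map f T))" by (rule inj_on_subset[OF hinj])
    then have "distinct (map h (map f T))" using dfT by (simp only: distinct_map)
    then show ?thesis using hL by simp
  qed
  have sL: "g \<in> set L" if g: "g \<in> carrier (alt_group 4)" for g
  proof -
    define g0 where "g0 = a \<otimes>\<^bsub>alt_group 4\<^esub> g \<otimes>\<^bsub>alt_group 4\<^esub> u0 \<otimes>\<^bsub>alt_group 4\<^esub> c"
    have "g0 \<in> set (map f T)" unfolding surjT g0_def using g car by simp
    then have "h g0 \<in> set L" unfolding hL[symmetric] set_map by (rule imageI)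
    moreover have "h g0 = g" unfolding h_def g0_def using g car by (simp add: G.m_assoc G.inv_cancel_left G.cancel_inv_left)
    ultimately show ?thesis by simp
  qed
  obtain ex where ex: "x = phi ex" using phi_surj xc(1) by blast
  obtain ey where ey: "y = phi ey" using phi_surj xc(2) by blast
  obtain eu where eu: "u = phi eu" using phi_surj xc(3) by blast
  obtain ev where ev: "v = phi ev" using phi_surj xc(4) by blast
  have hom: "phi (mt p q) = phi p \<otimes>\<^bsub>alt_group 4\<^esub> phi q" for p q
    by (simp add: phi_hom alt_group_mult)
  have one: "\<one>\<^bsub>alt_group 4\<^esub> = phi E0" by (simp add: alt_group_one)
  have cube_x: "x \<otimes>\<^bsub>alt_group 4\<^esub> x \<otimes>\<^bsub>alt_group 4\<^esub> x = \<one>\<^bsub>alt_group 4\<^esub>"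
    if "x \<otimes>\<^bsub>alt_group 4\<^esub> x \<noteq> \<one>\<^bsub>alt_group 4\<^esub>"
    using model_cube[of ex] that unfolding ex one hom[symmetric] by auto
  have cube_y: "y \<otimes>\<^bsub>alt_group 4\<^esub> y \<otimes>\<^bsub>alt_group 4\<^esub> y = \<one>\<^bsub>alt_group 4\<^esub>"
    if "y \<otimes>\<^bsub>alt_group 4\<^esub> y \<noteq> \<one>\<^bsub>alt_group 4\<^esub>"
    using model_cube[of ey] that unfolding ey one hom[symmetric] by auto
  have xx: "x \<otimes>\<^bsub>alt_group 4\<^esub> x = \<one>\<^bsub>alt_group 4\<^esub>"
  proof (rule ccontr)
    assume n: "x \<otimes>\<^bsub>alt_group 4\<^esub> x \<noteq> \<one>\<^bsub>alt_group 4\<^esub>"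
    have "x \<otimes>\<^bsub>alt_group 4\<^esub> x = \<one>\<^bsub>alt_group 4\<^esub>"
      using G.sq_aux_x[OF xc dL[unfolded L_def] sL[unfolded L_def] cube_x[OF n]] xc by simp
    with n show False ..
  qed
  have yy: "y \<otimes>\<^bsub>alt_group 4\<^esub> y = \<one>\<^bsub>alt_group 4\<^esub>"
  proof (rule ccontr)
    assume n: "y \<otimes>\<^bsub>alt_group 4\<^esub> y \<noteq> \<one>\<^bsub>alt_group 4\<^esub>"
    have "y \<otimes>\<^bsub>alt_group 4\<^esub> y = \<one>\<^bsub>alt_group 4\<^esub>"
      using G.sq_aux_y[OF xc dL[unfolded L_def] sL[unfolded L_def] cube_y[OF n]] xc by simp
    with n show False ..
  qed
  have mxx: "mt ex ex = E0" using xx unfolding ex one hom[symmetric] by (rule phi_inj)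
  have myy: "mt ey ey = E0" using yy unfolding ey one hom[symmetric] by (rule phi_inj)
  let ?l = "[E0, ex, ey, mt ex ey, eu, mt ex eu, mt eu ey, mt (mt ex eu) ey,
             ev, mt ex ev, mt ev ey, mt (mt ex ev) ey]"
  have "L = map phi ?l"
    unfolding L_def ex ey eu ev one by (simp add: hom)
  with dL have "distinct (map phi ?l)" by (simp only:)
  then have "distinct ?l" by (rule distinct_map[THEN iffD1, THEN conjunct1])
  then show False by (rule model_no[OF mxx myy])
qed

end
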